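(* Let $B$ be a real $Q\times Q$ matrix that is symmetric, positive definite, and satisfies $B_{pq}\le0$ for $p\ne q$, and consider a cone schedule generated by $B$ with workload $X(\cdot)$. Suppose $\lim_{k\to\infty}X(t_k)/t_k=\eta\neq0$ for some increasing unbounded sequence $(t_k)$. For each $k$, let $$s_k=\sup\{t<t_k:\mathcal C(X(t))\not\subseteq\mathcal C(\eta)\},$$ with the convention $s_k=0$ if this set is empty. Then $$\liminf_{k\to\infty}\frac{t_k-s_k}{t_k}=\epsilon_1>0 .$$
   Context: Fix integers $Q\ge1$ and $E\ge1$; queues are indexed by $q\in\{1,\dots,Q\}$ and environment states by $e\in\mathcal E=\{1,\dots,E\}$. For each $e$, $\mathcal S^e\subset\mathbb R^Q$ is a finite nonempty complete set of service vectors (components may be negative). Complete means that if $S\in\mathcal S^e$ and $S_q>0$, then replacing $S_q$ by $0$ gives a vector in $\mathcal S^e$. An environment trace is a measurable map $e:[0,\infty)\to\mathcal E$ with existing time proportions. The cumulative arrival $N(t)\in\mathbb R^Q_{\ge0}$ is componentwise nondecreasing with left limits, with traffic load $\rho=\lim_{t\to\infty}N(t)/t$. For $Y\in\mathbb R^Q_{\ge0}$, let $\hat{\mathcal S}^e(Y)=\arg\max_{S\in\mathcal S^e}\langle S,BY\rangle$. A cone schedule is a measurable map $S(\cdot)$, with workload $X(t)=X(0)+N(t)-\int_0^tS(z)\,dz\ge0$, such that for all $t$: - $S(t)\in\hat{\mathcal S}^{e(t)}(X(t))$; - $S_q(t)\le0$ whenever $X_q(t)=0$. Cones: for $Y\in\mathbb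 R^Q_{\ge0}$, $$\mathcal C^e(Y)=\{Z\in\mathbb R^Q_{\ge0}:\hat{\mathcal S}^e(Z)\cap\hat{\mathcal S}^e(Y)\ne\emptyset\},\qquad \mathcal C(Y)=\bigcap_{e\in\mathcal E}\mathcal C^e(Y).$$ *)

theory Defs
  imports "HOL-Analysis.Analysis"
begin

text \<open>Queues are indexed by a finite type 'q (so Q = CARD('q) \<ge> 1), environment
states by a finite type 'e (so E = CARD('e) \<ge> 1). Vectors in R^Q are real^'q.\<close>

definition nonneg_vec :: "real^'q \<Rightarrow> bool" where
  "nonneg_vec Y \<longleftrightarrow> (\<forall>i. 0 \<le> Y $ i)"

definition complete_service_set :: "(real^'q) set \<Rightarrow> bool" where
  "complete_service_set SS \<longleftrightarrow> finite SS \<and> SS \<noteq> {} \<and>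
     (\<forall>S\<in>SS. \<forall>q. 0 < S $ q \<longrightarrow> (\<chi> i. if i = q then 0 else S $ i) \<in> SS)"

definition opt_services :: "real^'q^'q \<Rightarrow> (real^'q) set \<Rightarrow> real^'q \<Rightarrow> (real^'q) set" where
  "opt_services B SS Y = {S \<in> SS. \<forall>S'\<in>SS. S' \<bullet> (B *v Y) \<le> S \<bullet> (B *v Y)}"

definition cone_env :: "real^'q^'q \<Rightarrow> (real^'q) set \<Rightarrow> real^'q \<Rightarrow> (real^'q) set" where
  "cone_env B SS Y = {Z. nonneg_vec Z \<and> opt_services B SS Z \<inter> opt_services B SS Y \<noteq> {}}"

definition cone :: "real^'q^'q \<Rightarrow> ('e::finite \<Rightarrow> (real^'q) set) \<Rightarrow> real^'q \<Rightarrow> (real^'q) set" where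
  "cone B Sset Y = (\<Inter>e. cone_env B (Sset e) Y)"

definition env_trace :: "(real \<Rightarrow> 'e::finite) \<Rightarrow> bool" where
  "env_trace env \<longleftrightarrow>
     (\<forall>e. {t \<in> {0..}. env t = e} \<in> sets lebesgue) \<and>
     (\<forall>e. \<exists>p. ((\<lambda>t. measure lebesgue {z \<in> {0..t}. env z = e} / t) \<longlongrightarrow> p) at_top)"

definition arrival_process :: "(real \<Rightarrow> real^'q) \<Rightarrow> bool" where
  "arrival_process N \<longleftrightarrow>
     (\<forall>t\<ge>0. nonneg_vec (N t)) \<and>
     (\<forall>s t. 0 \<le> s \<longrightarrow> s \<le> t \<longrightarrow> (\<forall>q. N s $ q \<le> N t $ q)) \<and>
     (\<forall>t>0. \<exists>l. (N \<longlongrightarrow> l) (at_left t)) \<and>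
     (\<exists>\<rho>. ((\<lambda>t. N t /\<^sub>R t) \<longlongrightarrow> \<rho>) at_top)"

definition workload :: "real^'q \<Rightarrow> (real \<Rightarrow> real^'q) \<Rightarrow> (real \<Rightarrow> real^'q) \<Rightarrow> real \<Rightarrow> real^'q" where
  "workload X0 N Sch t = X0 + N t - integral {0..t} Sch"

definition cone_schedule ::
  "real^'q^'q \<Rightarrow> ('e::finite \<Rightarrow> (real^'q) set) \<Rightarrow> (real \<Rightarrow> 'e) \<Rightarrow> (real \<Rightarrow> real^'q)
   \<Rightarrow> real^'q \<Rightarrow> (real \<Rightarrow> real^'q) \<Rightarrow> bool" where
  "cone_schedule B Sset env N X0 Sch \<longleftrightarrow>
     set_borel_measurable lebesgue {0..} Sch \<and>
     (\<forall>t\<ge>0. nonneg_vec (workload X0 N Sch t)) \<and>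
     (\<forall>t\<ge>0. Sch t \<in> opt_services B (Sset (env t)) (workload X0 N Sch t)) \<and>
     (\<forall>t\<ge>0. \<forall>q. workload X0 N Sch t $ q = 0 \<longrightarrow> Sch t $ q \<le> 0)"

definition last_exit :: "real^'q^'q \<Rightarrow> ('e::finite \<Rightarrow> (real^'q) set) \<Rightarrow> (real \<Rightarrow> real^'q)
   \<Rightarrow> real^'q \<Rightarrow> real \<Rightarrow> real" where
  "last_exit B Sset X \<eta> tk =
     (let T = {t. 0 \<le> t \<and> t < tk \<and> \<not> cone B Sset (X t) \<subseteq> cone B Sset \<eta>}
      in if T = {} then 0 else Sup T)"

end

theory Submission
  imports Defs
begin

lemma opt_scale:
  assumes "0 < c"
  shows "opt_services B SS (c *\<^sub>R Y) = opt_services B SS Y"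
  using assms unfolding opt_services_def
  by (auto simp: matrix_vector_mult_scaleR inner_scaleR_right mult_le_cancel_left_pos)

lemma cone_scale:
  assumes "0 < c"
  shows "cone B Sset (c *\<^sub>R Y) = cone B Sset Y"
  unfolding cone_def cone_env_def opt_scale[OF assms] ..

lemma cone_sub:
  assumes "\<forall>e. opt_services B (Sset e) Y \<subseteq> opt_services B (Sset e) \<eta>"
  shows "cone B Sset Y \<subseteq> cone B Sset \<eta>"
  using assms unfolding cone_def cone_env_def by blast

lemma opt_nbhd:
  fixes Sset :: "'e::finite \<Rightarrow> (real^'q::finite) set"
  assumes fin: "\<forall>e. finite (Sset e)"
  shows "\<exists>r>0. \<forall>Y. dist Y \<eta> < r \<longrightarrow> (\<forall>e. opt_services B (Sset e) Y \<subseteq> opt_services B (Sset e) \<eta>)"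
proof -
  have "eventually (\<lambda>Y. \<forall>e. \<forall>S\<in>Sset e. S \<in> opt_services B (Sset e) \<eta> \<or>
          (\<exists>S'\<in>Sset e. S \<bullet> (B *v Y) < S' \<bullet> (B *v Y))) (nhds \<eta>)"
  proof (rule eventually_all_finite, rule eventually_ball_finite[OF fin[rule_format]], intro ballI)
    fix e S assume S: "S \<in> Sset e"
    show "eventually (\<lambda>Y. S \<in> opt_services B (Sset e) \<eta> \<or>
          (\<exists>S'\<in>Sset e. S \<bullet> (B *v Y) < S' \<bullet> (B *v Y))) (nhds \<eta>)"
    proof (cases "S \<in> opt_services B (Sset e) \<eta>")
      case True then show ?thesis by simp
    next
      case False
      then obtain S' where S': "S' \<in> Sset e" "S \<bullet> (B *v \<eta>) < S' \<bullet> (B *v \<eta>)"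
        using S unfolding opt_services_def by force
      have c: "((\<lambda>Y. S' \<bullet> (B *v Y) - S \<bullet> (B *v Y)) \<longlongrightarrow> S' \<bullet> (B *v \<eta>) - S \<bullet> (B *v \<eta>)) (nhds \<eta>)"
        by (intro tendsto_intros bounded_linear.tendsto[OF matrix_vector_mul_bounded_linear] filterlim_ident)
      have "eventually (\<lambda>Y. 0 < S' \<bullet> (B *v Y) - S \<bullet> (B *v Y)) (nhds \<eta>)"
        using order_tendstoD(1)[OF c, of 0] S'(2) by simp
      then show ?thesis
        by eventually_elim (use S' in auto)
    qed
  qed
  then obtain r where r: "r > 0" and H: "\<And>Y. dist Y \<eta> < r \<Longrightarrow> \<forall>e. \<forall>S\<in>Sset e. S \<in> opt_services B (Sset e) \<eta> \<or>
          (\<exists>S'\<in>Sset e. S \<bullet> (B *v Y) < S' \<bullet> (B *v Y))"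
    unfolding eventually_nhds_metric by blast
  show ?thesis
  proof (intro exI conjI allI impI subsetI)
    fix Y e S assume d: "dist Y \<eta> < r" and S: "S \<in> opt_services B (Sset e) Y"
    then have "S \<in> Sset e" unfolding opt_services_def by auto
    with H[OF d] S show "S \<in> opt_services B (Sset e) \<eta>"
      unfolding opt_services_def by force
  qed fact
qed

lemma sch_integrable:
  fixes Sch :: "real \<Rightarrow> real^'q::finite"
  assumes m: "set_borel_measurable lebesgue {0..} Sch"
    and bnd: "\<And>t. 0 \<le> t \<Longrightarrow> norm (Sch t) \<le> M"
    and "0 \<le> a"
  shows "Sch integrable_on {a..b}"
proof -
  have "Sch \<in> borel_measurable (lebesgue_on {0..})"
    using m unfolding set_borel_measurable_def
    by (subst borel_measurable_restrict_space_iff) auto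
  then have "Sch \<in> borel_measurable (lebesgue_on {a..b})"
    by (rule measurable_restrict_mono) (use assms in auto)
  then show ?thesis
    by (rule measurable_bounded_by_integrable_imp_integrable[where g="\<lambda>_. M"])
       (use assms in auto)
qed

lemma int_diff_bound:
  fixes Sch :: "real \<Rightarrow> real^'q::finite"
  assumes m: "set_borel_measurable lebesgue {0..} Sch"
    and bnd: "\<And>t. 0 \<le> t \<Longrightarrow> norm (Sch t) \<le> M"
    and "0 \<le> s" "s \<le> t"
  shows "norm (integral {0..t} Sch - integral {0..s} Sch) \<le> M * (t - s)"
proof -
  have M0: "0 \<le> M" using bnd[of 0] norm_ge_zero order_trans by blast
  have i: "Sch integrable_on {0..t}" by (rule sch_integrable[OF m bnd]) auto
  have "integral {0..s} Sch + integral {s..t} Sch = integral {0..t} Sch"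
    by (rule Henstock_Kurzweil_Integration.integral_combine) (use assms i in auto)
  then have e: "integral {0..t} Sch - integral {0..s} Sch = integral {s..t} Sch"
    by (metis add_diff_cancel_left')
  have i2: "Sch integrable_on {s..t}" by (rule sch_integrable[OF m bnd]) (use assms in auto)
  have "norm (integral {s..t} Sch) \<le> M * Henstock_Kurzweil_Integration.content (cbox s t)"
    by (rule has_integral_bound[OF M0]) (use i2 assms bnd in auto)
  then show ?thesis using e assms by simp
qed

lemma N_bound:
  fixes N :: "real \<Rightarrow> real^'q::finite"
  assumes arr: "arrival_process N" and rho: "((\<lambda>t. N t /\<^sub>R t) \<longlongrightarrow> \<rho>) at_top"
    and e: "0 < \<epsilon>"
  shows "\<exists>T. \<forall>t\<ge>T. \<forall>s. 0 \<le> s \<longrightarrow> s \<le> t \<longrightarrow> norm (N s - s *\<^sub>R \<rho>) \<le> \<epsilon> * t"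
proof -
  have "eventually (\<lambda>t. dist (N t /\<^sub>R t) \<rho> < \<epsilon>) at_top"
    using tendstoD[OF rho e] .
  then obtain T0 where T0: "\<And>t. t \<ge> T0 \<Longrightarrow> dist (N t /\<^sub>R t) \<rho> < \<epsilon>"
    unfolding eventually_at_top_linorder by blast
  define T1 where "T1 = max 1 T0"
  have nn: "\<And>t. 0 \<le> t \<Longrightarrow> nonneg_vec (N t)" and mono: "\<And>s t q. 0 \<le> s \<Longrightarrow> s \<le> t \<Longrightarrow> N s $ q \<le> N t $ q"
    using arr unfolding arrival_process_def by auto
  define C where "C = (\<Sum>i\<in>UNIV. N T1 $ i) + T1 * norm \<rho>"
  have small: "norm (N s - s *\<^sub>R \<rho>) \<le> C" if "0 \<le> s" "s \<le> T1" for s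
  proof -
    have "norm (N s) \<le> (\<Sum>i\<in>UNIV. \<bar>N s $ i\<bar>)" by (rule norm_le_l1_cart)
    also have "\<dots> \<le> (\<Sum>i\<in>UNIV. N T1 $ i)"
      by (rule sum_mono) (use nn[OF that(1)] mono[OF that] in \<open>auto simp: nonneg_vec_def\<close>)
    finally have a: "norm (N s) \<le> (\<Sum>i\<in>UNIV. N T1 $ i)" .
    have b: "norm (s *\<^sub>R \<rho>) \<le> T1 * norm \<rho>"
      using that by (simp add: mult_right_mono)
    have "norm (N s - s *\<^sub>R \<rho>) \<le> norm (N s) + norm (s *\<^sub>R \<rho>)" by (rule norm_triangle_ineq4)
    then show ?thesis using a b unfolding C_def by linarith
  qed
  show ?thesis
  proof (intro exI allI impI)
    fix t s assume t: "max T1 (C / \<epsilon>) \<le> t" and s: "0 \<le> s" "s \<le> t"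
    show "norm (N s - s *\<^sub>R \<rho>) \<le> \<epsilon> * t"
    proof (cases "s \<le> T1")
      case True
      have "C \<le> \<epsilon> * t" using t e by (simp add: field_simps)
      then show ?thesis using small[OF s(1) True] by linarith
    next
      case False
      then have sp: "0 < s" "T0 \<le> s" unfolding T1_def by auto
      have "N s - s *\<^sub>R \<rho> = s *\<^sub>R (N s /\<^sub>R s - \<rho>)" using sp by (simp add: algebra_simps)
      then have "norm (N s - s *\<^sub>R \<rho>) = s * dist (N s /\<^sub>R s) \<rho>"
        using sp by (simp add: dist_norm)
      also have "\<dots> \<le> s * \<epsilon>" using T0[OF sp(2)] sp by (simp add: less_imp_le)
      also have "\<dots> \<le> \<epsilon> * t" using s e by (simp add: mult.commute mult_left_mono)
      finally show ?thesis .
    qed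
  qed
qed

theorem lemma5:
  fixes B :: "real^'q::finite^'q"
    and Sset :: "'e::finite \<Rightarrow> (real^'q) set"
    and env :: "real \<Rightarrow> 'e"
    and N :: "real \<Rightarrow> real^'q"
    and X0 :: "real^'q"
    and Sch :: "real \<Rightarrow> real^'q"
    and tk :: "nat \<Rightarrow> real"
    and \<eta> :: "real^'q"
  assumes services: "\<forall>e. complete_service_set (Sset e)"
    and symB: "transpose B = B"
    and posdefB: "\<forall>x. x \<noteq> 0 \<longrightarrow> 0 < x \<bullet> (B *v x)"
    and offdiagB: "\<forall>p q. p \<noteq> q \<longrightarrow> B $ p $ q \<le> 0"
    and env: "env_trace env"
    and arr: "arrival_process N"
    and sched: "cone_schedule B Sset env N X0 Sch"
    and tk_nonneg: "\<forall>k. 0 \<le> tk k"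
    and tk_mono: "strict_mono tk"
    and tk_unbounded: "filterlim tk at_top sequentially"
    and lim: "((\<lambda>k. workload X0 N Sch (tk k) /\<^sub>R tk k) \<longlongrightarrow> \<eta>) sequentially"
    and eta_ne: "\<eta> \<noteq> 0"
  shows "\<exists>\<epsilon>1>0. liminf (\<lambda>k. ereal ((tk k - last_exit B Sset (workload X0 N Sch) \<eta> (tk k)) / tk k))
                 = ereal \<epsilon>1"
proof -
  define X where "X = workload X0 N Sch"
  define I where "I = (\<lambda>t. integral {0..t} Sch)"
  have Xdef: "\<And>t. X t = X0 + N t - I t" unfolding X_def I_def workload_def by simp
  have fin: "\<forall>e. finite (Sset e)" using services unfolding complete_service_set_def by auto
  define M where "M = (\<Sum>e\<in>UNIV. \<Sum>S\<in>Sset e. norm S)"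
  have bnd: "norm (Sch t) \<le> M" if "0 \<le> t" for t
  proof -
    have "Sch t \<in> Sset (env t)" using sched that
      unfolding cone_schedule_def opt_services_def by auto
    then have "norm (Sch t) \<le> (\<Sum>S\<in>Sset (env t). norm S)"
      by (intro member_le_sum) (use fin in auto)
    also have "\<dots> \<le> M" unfolding M_def
      by (rule member_le_sum) (auto intro: sum_nonneg)
    finally show ?thesis .
  qed
  have M0: "0 \<le> M" using bnd[of 0] norm_ge_zero order_trans by blast
  have meas: "set_borel_measurable lebesgue {0..} Sch" using sched unfolding cone_schedule_def by auto
  obtain \<rho> where rho: "((\<lambda>t. N t /\<^sub>R t) \<longlongrightarrow> \<rho>) at_top" using arr unfolding arrival_process_def by auto
  obtain r where r: "r > 0" and rH: "\<And>Y. dist Y \<eta> < r \<Longrightarrow> \<forall>e. opt_services B (Sset e) Y \<subseteq> opt_services B (Sset e) \<eta>"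
    using opt_nbhd[OF fin, of \<eta> B] by blast
  define \<delta> where "\<delta> = min 1 (r / (4 * (norm \<rho> + M + 1)))"
  have "0 < 4 * norm \<rho> + 4 * M + 4" using M0 norm_ge_zero[of \<rho>] by linarith
  then have d0: "0 < \<delta>" "\<delta> \<le> 1" using r M0 unfolding \<delta>_def by (auto simp: algebra_simps)
  have dle: "\<delta> * (norm \<rho> + M) \<le> r / 4"
  proof -
    have "\<delta> * (norm \<rho> + M) \<le> (r / (4 * (norm \<rho> + M + 1))) * (norm \<rho> + M)"
      by (rule mult_right_mono) (use M0 in \<open>auto simp: \<delta>_def\<close>)
    also have "\<dots> \<le> (r / (4 * (norm \<rho> + M + 1))) * (norm \<rho> + M + 1)"
      by (rule mult_left_mono) (use M0 r in auto)
    also have "\<dots> = r / 4" using \<open>0 < 4 * norm \<rho> + 4 * M + 4\<close> by (simp add: field_simps)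
    finally show ?thesis .
  qed
  obtain T where T: "\<And>t s. t \<ge> T \<Longrightarrow> 0 \<le> s \<Longrightarrow> s \<le> t \<Longrightarrow> norm (N s - s *\<^sub>R \<rho>) \<le> (r/8) * t"
    using N_bound[OF arr rho, of "r/8"] r by auto
  have ev1: "eventually (\<lambda>k. dist (X (tk k) /\<^sub>R tk k) \<eta> < r/4) sequentially"
    using tendstoD[OF lim, of "r/4"] r unfolding X_def by simp
  have ev2: "eventually (\<lambda>k. max 1 T \<le> tk k) sequentially"
    using tk_unbounded unfolding filterlim_at_top by blast
  have key: "eventually (\<lambda>k. \<delta> \<le> (tk k - last_exit B Sset X \<eta> (tk k)) / tk k
                  \<and> (tk k - last_exit B Sset X \<eta> (tk k)) / tk k \<le> 1) sequentially"
    using ev1 ev2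
  proof eventually_elim
    case (elim k)
    define t where "t = tk k"
    have t: "t \<ge> 1" "t \<ge> T" and tpos: "t > 0" using elim(2) unfolding t_def by auto
    have dt: "dist (X t /\<^sub>R t) \<eta> < r/4" using elim(1) unfolding t_def .
    have ntX: "norm (X t - t *\<^sub>R \<eta>) < t * (r/4)"
    proof -
      have "X t - t *\<^sub>R \<eta> = t *\<^sub>R (X t /\<^sub>R t - \<eta>)" using tpos by (simp add: algebra_simps)
      then have "norm (X t - t *\<^sub>R \<eta>) = t * dist (X t /\<^sub>R t) \<eta>" using tpos by (simp add: dist_norm)
      then show ?thesis using dt tpos by simp
    qed
    define TT where "TT = {s. 0 \<le> s \<and> s < t \<and> \<not> cone B Sset (X s) \<subseteq> cone B Sset \<eta>}"
    have inTT: "s < t - \<delta> * t" if "s \<in> TT" for s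
    proof (rule ccontr)
      assume "\<not> s < t - \<delta> * t"
      then have ts: "t - s \<le> \<delta> * t" by simp
      have s: "0 \<le> s" "s \<le> t" "\<not> cone B Sset (X s) \<subseteq> cone B Sset \<eta>" using that unfolding TT_def by auto
      have eq: "X s - t *\<^sub>R \<eta> = (X t - t *\<^sub>R \<eta>) + ((N s - s *\<^sub>R \<rho>) - (N t - t *\<^sub>R \<rho>))
                 - (t - s) *\<^sub>R \<rho> + (I t - I s)"
        unfolding Xdef by (simp add: algebra_simps)
      have n1: "norm (N s - s *\<^sub>R \<rho>) \<le> (r/8) * t" using T[OF t(2) s(1) s(2)] .
      have n2: "norm (N t - t *\<^sub>R \<rho>) \<le> (r/8) * t" using T[OF t(2)] tpos by auto
      have n3: "norm ((t - s) *\<^sub>R \<rho>) \<le> (t - s) * norm \<rho>" using s by simp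
      have n4: "norm (I t - I s) \<le> M * (t - s)" unfolding I_def
        by (rule int_diff_bound[OF meas bnd]) (use s in auto)
      have "norm (X s - t *\<^sub>R \<eta>) \<le> norm (X t - t *\<^sub>R \<eta>) + (norm (N s - s *\<^sub>R \<rho>) + norm (N t - t *\<^sub>R \<rho>))
               + norm ((t - s) *\<^sub>R \<rho>) + norm (I t - I s)"
      proof -
        let ?a = "X t - t *\<^sub>R \<eta>" and ?b = "N s - s *\<^sub>R \<rho>" and ?c = "N t - t *\<^sub>R \<rho>"
          and ?d = "(t - s) *\<^sub>R \<rho>" and ?e = "I t - I s"
        have "norm (?a + (?b - ?c) - ?d + ?e) \<le> norm (?a + (?b - ?c) - ?d) + norm ?e" by (rule norm_triangle_ineq)
        moreover have "norm (?a + (?b - ?c) - ?d) \<le> norm (?a + (?b - ?c)) + norm ?d" by (rule norm_triangle_ineq4)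
        moreover have "norm (?a + (?b - ?c)) \<le> norm ?a + norm (?b - ?c)" by (rule norm_triangle_ineq)
        moreover have "norm (?b - ?c) \<le> norm ?b + norm ?c" by (rule norm_triangle_ineq4)
        ultimately show ?thesis unfolding eq by linarith
      qed
      moreover have "(t - s) * (norm \<rho> + M) \<le> (\<delta> * t) * (norm \<rho> + M)"
        by (rule mult_right_mono) (use ts M0 in auto)
      moreover have "(\<delta> * t) * (norm \<rho> + M) \<le> (r/4) * t"
        using mult_right_mono[OF dle, of t] tpos by (simp add: algebra_simps)
      moreover have "(t - s) * (norm \<rho> + M) = (t - s) * norm \<rho> + M * (t - s)" by (simp add: algebra_simps)
      ultimately have "norm (X s - t *\<^sub>R \<eta>) < t * (r/4) + (r/4) * t + (r/4) * t"
        using ntX n1 n2 n3 n4 by linarith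
      then have "norm (X s - t *\<^sub>R \<eta>) < t * r" using mult_pos_pos[OF tpos r] by (simp add: algebra_simps)
      then have "dist ((1/t) *\<^sub>R X s) \<eta> < r"
      proof -
        have "(1/t) *\<^sub>R X s - \<eta> = (1/t) *\<^sub>R (X s - t *\<^sub>R \<eta>)" using tpos by (simp add: algebra_simps)
        then have "dist ((1/t) *\<^sub>R X s) \<eta> = norm (X s - t *\<^sub>R \<eta>) / t" using tpos by (simp add: dist_norm)
        then show ?thesis using \<open>norm (X s - t *\<^sub>R \<eta>) < t * r\<close> tpos by (simp add: divide_less_eq mult.commute)
      qed
      then have "cone B Sset ((1/t) *\<^sub>R X s) \<subseteq> cone B Sset \<eta>" by (intro cone_sub rH)
      then show False using s(3) cone_scale[of "1/t" B Sset "X s"] tpos by simp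
    qed
    have le: "last_exit B Sset X \<eta> t \<le> t - \<delta> * t" and ge: "0 \<le> last_exit B Sset X \<eta> t"
    proof -
      have "last_exit B Sset X \<eta> t = (if TT = {} then 0 else Sup TT)"
        unfolding last_exit_def TT_def Let_def by simp
      moreover have "TT \<noteq> {} \<Longrightarrow> Sup TT \<le> t - \<delta> * t"
        by (rule cSup_least) (use inTT in force)+
      moreover have "TT \<noteq> {} \<Longrightarrow> 0 \<le> Sup TT"
      proof -
        assume "TT \<noteq> {}" then obtain s where "s \<in> TT" by auto
        moreover have "bdd_above TT" unfolding TT_def bdd_above_def by (auto intro: less_imp_le)
        ultimately have "s \<le> Sup TT" by (rule cSup_upper)
        then show ?thesis using \<open>s \<in> TT\<close> unfolding TT_def by auto
      qed
      moreover have "0 \<le> t - \<delta> * t" using d0 tpos by (simp add: mult_left_le_one_le)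
      ultimately show "last_exit B Sset X \<eta> t \<le> t - \<delta> * t" "0 \<le> last_exit B Sset X \<eta> t" by auto
    qed
    have "\<delta> \<le> (t - last_exit B Sset X \<eta> t) / t" using le tpos by (simp add: field_simps)
    moreover have "(t - last_exit B Sset X \<eta> t) / t \<le> 1" using ge tpos by (simp add: field_simps)
    ultimately show ?case unfolding t_def by simp
  qed
  define L where "L = liminf (\<lambda>k. ereal ((tk k - last_exit B Sset X \<eta> (tk k)) / tk k))"
  have L1: "ereal \<delta> \<le> L" unfolding L_def
    by (rule Liminf_bounded) (use key in \<open>auto elim: eventually_mono\<close>)
  have L2: "L \<le> ereal 1" unfolding L_def
    by (rule Liminf_le) (use key in \<open>auto elim: eventually_mono\<close>)
  obtain l where l: "L = ereal l" using L1 L2 by (cases L) auto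
  have "0 < l" using L1 d0 l by auto
  then show ?thesis using l unfolding L_def X_def by blast
qed
end
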